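(* Let $k$ be an infinite field, $d>0$, $a\geq 7$ integers with $\gcd(a,d)=1$, and $R=k[[t^a,t^{2a+d},t^{3a+3d},t^{4a+6d}]]$ with maximal ideal $\mathfrak{m}$. The Hilbert series of the tangent cone $G_{\mathfrak{m}}$, $\sum_{n\geq0}\dim_k(\mathfrak{m}^n/\mathfrak{m}^{n+1})x^n$, equals $$\frac{\sum_{k=0}^{\lfloor a/6\rfloor+2}t_kx^k}{1-x},\qquad t_k=\#\{i\mid 0\leq i\leq a-1,\ \mu_i+\nu_i+\xi_i=k\}.$$
   Context: For $1\leq i\leq a-1$ write $i=6\mu_i+q_i$ with $0\leq q_i<6$, set $(\nu_i,\xi_i)=(1,q_i-3)$ if $q_i\geq3$ and $(\nu_i,\xi_i)=(0,q_i)$ if $q_i<3$; set $(\mu_0,\nu_0,\xi_0)=(0,0,0)$. *)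

theory Defs
  imports "HOL-Computational_Algebra.Formal_Power_Series"
begin

definition num_semigroup :: "nat list \<Rightarrow> nat set" where
  "num_semigroup gs = {n. \<exists>c::nat \<Rightarrow> nat. n = (\<Sum>j<length gs. c j * gs ! j)}"

(* the complete semigroup ring k[[t^s : s in S]] as a subring of k[[t]] *)
definition sg_ring :: "nat set \<Rightarrow> 'k::field fps set" where
  "sg_ring S = {f. \<forall>n. fps_nth f n \<noteq> 0 \<longrightarrow> n \<in> S}"

definition sg_max_ideal :: "nat set \<Rightarrow> 'k::field fps set" where
  "sg_max_ideal S = {f \<in> sg_ring S. fps_nth f 0 = 0}"

definition ideal_prod :: "'k::field fps set \<Rightarrow> 'k fps set \<Rightarrow> 'k fps set" where
  "ideal_prod I J = {g. \<exists>r (x::nat \<Rightarrow> 'k fps) y. (\<forall>i<r. x i \<in> I \<and> y i \<in> J) \<and>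
                          g = (\<Sum>i<r. x i * y i)}"

fun max_ideal_pow :: "nat set \<Rightarrow> nat \<Rightarrow> 'k::field fps set" where
  "max_ideal_pow S 0 = sg_ring S"
| "max_ideal_pow S (Suc n) = ideal_prod (sg_max_ideal S) (max_ideal_pow S n)"

(* dim_k (A / B) = r  (A, B k-subspaces, B subset A), k acting by fps_const *)
definition quot_dim :: "'k::field fps set \<Rightarrow> 'k fps set \<Rightarrow> nat \<Rightarrow> bool" where
  "quot_dim A B r \<longleftrightarrow> (\<exists>f :: nat \<Rightarrow> 'k fps.
      (\<forall>i<r. f i \<in> A) \<and>
      (\<forall>c :: nat \<Rightarrow> 'k. (\<Sum>i<r. fps_const (c i) * f i) \<in> B \<longrightarrow> (\<forall>i<r. c i = 0)) \<and>
      (\<forall>g\<in>A. \<exists>c :: nat \<Rightarrow> 'k. g - (\<Sum>i<r. fps_const (c i) * f i) \<in> B))"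

definition mu_i :: "nat \<Rightarrow> nat" where "mu_i i = i div 6"
definition nu_i :: "nat \<Rightarrow> nat" where "nu_i i = (if i mod 6 \<ge> 3 then 1 else 0)"
definition xi_i :: "nat \<Rightarrow> nat" where
  "xi_i i = (if i mod 6 \<ge> 3 then i mod 6 - 3 else i mod 6)"

definition t_coeff :: "nat \<Rightarrow> nat \<Rightarrow> nat" where
  "t_coeff a k = card {i. i \<le> a - 1 \<and> mu_i i + nu_i i + xi_i i = k}"

end

theory Submission
  imports Defs
begin

unbundle fps_syntax

definition Tset :: "nat list \<Rightarrow> nat \<Rightarrow> nat set" where
  "Tset gs n = {s. \<exists>c::nat\<Rightarrow>nat. s = (\<Sum>j<length gs. c j * gs!j) \<and> n \<le> (\<Sum>j<length gs. c j)}"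

definition Eset :: "nat set \<Rightarrow> 'k::field fps set" where
  "Eset T = {f. \<forall>s. fps_nth f s \<noteq> 0 \<longrightarrow> s \<in> T}"

lemma T_mono: "m \<le> n \<Longrightarrow> Tset gs n \<subseteq> Tset gs m"
  unfolding Tset_def by force

lemma T0: "Tset gs 0 = num_semigroup gs"
  unfolding Tset_def num_semigroup_def by simp

lemma T_add:
  assumes "u \<in> Tset gs m" "v \<in> Tset gs n" shows "u + v \<in> Tset gs (m+n)"
proof -
  obtain c where c: "u = (\<Sum>j<length gs. c j * gs!j)" "m \<le> (\<Sum>j<length gs. c j)"
    using assms(1) unfolding Tset_def by blast
  obtain c' where c': "v = (\<Sum>j<length gs. c' j * gs!j)" "n \<le> (\<Sum>j<length gs. c' j)"
    using assms(2) unfolding Tset_def by blast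
  have "u + v = (\<Sum>j<length gs. (c j + c' j) * gs!j)"
    unfolding c c' by (simp add: sum.distrib distrib_right)
  moreover have "m + n \<le> (\<Sum>j<length gs. (c j + c' j))"
    using c c' by (simp add: sum.distrib)
  ultimately show ?thesis unfolding Tset_def by (intro CollectI exI[of _ "\<lambda>j. c j + c' j"]) simp
qed

lemma T1:
  assumes "u \<in> num_semigroup gs" "u \<noteq> 0" shows "u \<in> Tset gs 1"
proof -
  obtain c where c: "u = (\<Sum>j<length gs. c j * gs!j)"
    using assms(1) unfolding num_semigroup_def by blast
  have "(\<Sum>j<length gs. c j) \<noteq> 0"
  proof
    assume "(\<Sum>j<length gs. c j) = 0"
    then have "\<forall>j<length gs. c j = 0" by simp
    then have "u = 0" unfolding c by simp
    then show False using assms(2) by simp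
  qed
  then have "1 \<le> (\<Sum>j<length gs. c j)" by linarith
  then show ?thesis using c unfolding Tset_def by blast
qed

lemma Tstep:
  assumes "s \<in> Tset gs (Suc n)"
  shows "\<exists>j<length gs. gs!j \<le> s \<and> s - gs!j \<in> Tset gs n"
proof -
  obtain c where c: "s = (\<Sum>j<length gs. c j * gs!j)" "Suc n \<le> (\<Sum>j<length gs. c j)"
    using assms unfolding Tset_def by blast
  obtain j where j: "j < length gs" "c j \<noteq> 0"
  proof (rule ccontr)
    assume "\<not> thesis"
    then have "\<forall>j<length gs. c j = 0" using that by blast
    then have "(\<Sum>j<length gs. c j) = 0" by simp
    then show False using c(2) by simp
  qed
  define c' where "c' = c(j := c j - 1)"
  have fin: "finite {..<length gs}" by simp
  have jin: "j \<in> {..<length gs}" using j by simp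
  have e1: "(\<Sum>i<length gs. c i * gs!i) = c j * gs!j + (\<Sum>i\<in>{..<length gs} - {j}. c i * gs!i)"
    using sum.remove[OF fin jin] by simp
  have e2: "(\<Sum>i<length gs. c' i * gs!i) = c' j * gs!j + (\<Sum>i\<in>{..<length gs} - {j}. c' i * gs!i)"
    using sum.remove[OF fin jin] by simp
  have e3: "(\<Sum>i<length gs. c i) = c j + (\<Sum>i\<in>{..<length gs} - {j}. c i)"
    using sum.remove[OF fin jin] by simp
  have e4: "(\<Sum>i<length gs. c' i) = c' j + (\<Sum>i\<in>{..<length gs} - {j}. c' i)"
    using sum.remove[OF fin jin] by simp
  have r1: "(\<Sum>i\<in>{..<length gs} - {j}. c' i * gs!i) = (\<Sum>i\<in>{..<length gs} - {j}. c i * gs!i)"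
    by (rule sum.cong) (auto simp: c'_def)
  have r2: "(\<Sum>i\<in>{..<length gs} - {j}. c' i) = (\<Sum>i\<in>{..<length gs} - {j}. c i)"
    by (rule sum.cong) (auto simp: c'_def)
  have cj: "c' j = c j - 1" unfolding c'_def by simp
  obtain k where k: "c j = Suc k" using j(2) by (cases "c j") auto
  have A: "s = (\<Sum>i<length gs. c' i * gs!i) + gs!j"
    using c(1) e1 e2 r1 cj k by simp
  have B: "n \<le> (\<Sum>i<length gs. c' i)"
    using c(2) e3 e4 r2 cj j(2) by simp
  have "gs!j \<le> s" using A by simp
  moreover have "s - gs!j \<in> Tset gs n" using A B unfolding Tset_def by force
  ultimately show ?thesis using j(1) by blast
qed

lemma E_sum:
  assumes "\<forall>i<r. x i \<in> Eset T" shows "(\<Sum>i<r. x i) \<in> Eset T"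
  unfolding Eset_def
proof (intro CollectI allI impI)
  fix s assume "(\<Sum>i<r. x i) $ s \<noteq> 0"
  then have "(\<Sum>i<r. x i $ s) \<noteq> 0" by (simp add: fps_sum_nth)
  then obtain i where "i \<in> {..<r}" "x i $ s \<noteq> 0"
    using sum.not_neutral_contains_not_neutral by blast
  then show "s \<in> T" using assms unfolding Eset_def by auto
qed

lemma pow_eq:
  assumes pos: "\<forall>g\<in>set gs. 0 < g"
  shows "max_ideal_pow (num_semigroup gs) n = (Eset (Tset gs n) :: 'k::field fps set)"
proof (induction n)
  case 0
  show ?case by (simp add: sg_ring_def Eset_def T0)
next
  case (Suc n)
  define S where "S = num_semigroup gs"
  define L where "L = length gs"
  have "ideal_prod (sg_max_ideal S) (Eset (Tset gs n)) = (Eset (Tset gs (Suc n)) :: 'k fps set)"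
  proof (rule set_eqI, rule iffI)
    fix g :: "'k fps"
    assume "g \<in> ideal_prod (sg_max_ideal S) (Eset (Tset gs n))"
    then obtain r and x y :: "nat \<Rightarrow> 'k fps" where xy: "\<forall>i<r. x i \<in> sg_max_ideal S \<and> y i \<in> Eset (Tset gs n)"
      and g: "g = (\<Sum>i<r. x i * y i)" unfolding ideal_prod_def by auto
    have "\<forall>i<r. x i * y i \<in> Eset (Tset gs (Suc n))"
    proof (intro allI impI)
      fix i assume i: "i < r"
      show "x i * y i \<in> Eset (Tset gs (Suc n))" unfolding Eset_def
      proof (intro CollectI allI impI)
        fix s assume "(x i * y i) $ s \<noteq> 0"
        then have "(\<Sum>u=0..s. x i $ u * y i $ (s - u)) \<noteq> 0" by (simp add: fps_mult_nth)
        then obtain u where u: "u \<in> {0..s}" "x i $ u * y i $ (s - u) \<noteq> 0"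
          using sum.not_neutral_contains_not_neutral by blast
        have xu: "x i $ u \<noteq> 0" "y i $ (s-u) \<noteq> 0" using u(2) by auto
        have x0: "x i $ 0 = 0" using xy i unfolding sg_max_ideal_def by auto
        have "u \<in> S" using xy i xu(1) unfolding sg_max_ideal_def sg_ring_def by auto
        moreover have "u \<noteq> 0" using xu(1) x0 by metis
        ultimately
        have "u \<in> Tset gs 1" unfolding S_def by (rule T1)
        moreover have "s - u \<in> Tset gs n" using xy i xu(2) unfolding Eset_def by auto
        ultimately have "u + (s - u) \<in> Tset gs (1 + n)" by (rule T_add)
        then show "s \<in> Tset gs (Suc n)" using u(1) by simp
      qed
    qed
    then show "g \<in> Eset (Tset gs (Suc n))" unfolding g by (rule E_sum)
  next
    fix f :: "'k fps"
    assume f: "f \<in> Eset (Tset gs (Suc n))"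
    define P where "P = (\<lambda>s j. j < L \<and> gs!j \<le> s \<and> s - gs!j \<in> Tset gs n)"
    define ch where "ch = (\<lambda>s. LEAST j. P s j)"
    have chP: "P s (ch s)" if "s \<in> Tset gs (Suc n)" for s
    proof -
      have "\<exists>j. P s j" using Tstep[OF that] unfolding P_def L_def by blast
      then show ?thesis unfolding ch_def by (rule LeastI_ex)
    qed
    define y where "y = (\<lambda>j. Abs_fps (\<lambda>u. if u + gs!j \<in> Tset gs (Suc n) \<and> ch (u + gs!j) = j
                                          then f $ (u + gs!j) else 0))"
    define x where "x = (\<lambda>j. (fps_X :: 'k fps) ^ (gs!j))"
    have xin: "x j \<in> sg_max_ideal S" if "j < L" for j
    proof -
      have "gs!j \<in> S"
      proof -
        have "(\<Sum>i<L. (if i = j then 1 else 0) * gs!i) = (\<Sum>i<L. if i = j then gs!i else 0)"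
          by (rule sum.cong) auto
        also have "\<dots> = gs!j" using that by simp
        finally have ee: "(\<Sum>i<L. (if i = j then 1 else 0) * gs!i) = gs!j" .
        show ?thesis unfolding S_def num_semigroup_def
          by (intro CollectI exI[of _ "\<lambda>i. if i = j then 1 else 0"]) (rule sym[OF ee[unfolded L_def]])
      qed
      moreover have "gs!j \<in> set gs" using that unfolding L_def by simp
      then have "gs!j \<noteq> 0" using pos by auto
      ultimately show ?thesis unfolding x_def sg_max_ideal_def sg_ring_def by auto
    qed
    have yin: "y j \<in> Eset (Tset gs n)" for j
      unfolding Eset_def
    proof (intro CollectI allI impI)
      fix u assume "y j $ u \<noteq> 0"
      then have h: "u + gs!j \<in> Tset gs (Suc n)" "ch (u + gs!j) = j" unfolding y_def by (auto split: if_splits)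
      from chP[OF h(1)] h(2) show "u \<in> Tset gs n" unfolding P_def by simp
    qed
    have feq: "f = (\<Sum>j<L. x j * y j)"
    proof (rule fps_ext)
      fix s
      have "(\<Sum>j<L. x j * y j) $ s = (\<Sum>j<L. (x j * y j) $ s)" by (simp add: fps_sum_nth)
      also have "\<dots> = (\<Sum>j<L. if j = ch s then (if s \<in> Tset gs (Suc n) then f $ s else 0) else 0)"
      proof (rule sum.cong)
        fix j assume j: "j \<in> {..<L}"
        show "(x j * y j) $ s = (if j = ch s then (if s \<in> Tset gs (Suc n) then f $ s else 0) else 0)"
        proof (cases "s < gs!j")
          case True
          have "\<not> (j = ch s \<and> s \<in> Tset gs (Suc n))"
            using chP[of s] True unfolding P_def by auto
          then show ?thesis using True unfolding x_def by (auto simp: fps_X_power_mult_nth)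
        next
          case False
          then have "s - gs!j + gs!j = s" by simp
          then show ?thesis using False unfolding x_def y_def by (auto simp: fps_X_power_mult_nth)
        qed
      qed simp
      also have "\<dots> = (if s \<in> Tset gs (Suc n) then f $ s else 0)"
      proof (cases "s \<in> Tset gs (Suc n)")
        case True
        then have "ch s < L" using chP unfolding P_def by blast
        then show ?thesis by (simp add: sum.delta')
      next
        case False
        then show ?thesis by simp
      qed
      also have "\<dots> = f $ s" using f unfolding Eset_def by auto
      finally show "f $ s = (\<Sum>j<L. x j * y j) $ s" by simp
    qed
    show "f \<in> ideal_prod (sg_max_ideal S) (Eset (Tset gs n))"
      unfolding ideal_prod_def
    proof (rule CollectI, rule exI[of _ L], rule exI[of _ x], rule exI[of _ y], intro conjI allI impI)
      fix i assume "i < L" then show "x i \<in> sg_max_ideal S" by (rule xin)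
    next
      fix i assume "i < L" show "y i \<in> Eset (Tset gs n)" by (rule yin)
    next
      show "f = (\<Sum>i<L. x i * y i)" by (rule feq)
    qed
  qed
  then show ?case using Suc.IH unfolding S_def by simp
qed

lemma qd:
  assumes "finite B" "B \<subseteq> T" "T - B \<subseteq> T'" "B \<inter> T' = {}"
  shows "quot_dim (Eset T :: 'k::field fps set) (Eset T') (card B)"
proof -
  define r where "r = card B"
  obtain e where e: "bij_betw e {0..<r} B" using ex_bij_betw_nat_finite[OF assms(1)] unfolding r_def by blast
  have inj: "inj_on e {..<r}" and img: "e ` {..<r} = B"
    using e unfolding bij_betw_def by (auto simp: atLeast0LessThan)
  define f where "f = (\<lambda>i. (fps_X :: 'k fps) ^ (e i))"
  have coef: "(\<Sum>i<r. fps_const (c i) * f i) $ s = (\<Sum>i<r. if s = e i then c i else 0)" for c s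
    unfolding f_def by (simp add: fps_sum_nth) (intro sum.cong; simp)
  have at: "(\<Sum>i<r. fps_const (c i) * f i) $ (e i0) = c i0" if "i0 < r" for c i0
  proof -
    have "(\<Sum>i<r. if e i0 = e i then c i else 0) = (\<Sum>i<r. if i = i0 then c i else 0)"
      by (rule sum.cong) (use inj that in \<open>auto dest: inj_onD\<close>)
    then show ?thesis unfolding coef using that by simp
  qed
  have off: "(\<Sum>i<r. fps_const (c i) * f i) $ s = 0" if "s \<notin> B" for c s
  proof -
    have "\<forall>i<r. s \<noteq> e i" using that img by auto
    then show ?thesis unfolding coef by simp
  qed
  show ?thesis unfolding quot_dim_def r_def[symmetric]
  proof (intro exI[of _ f] conjI allI impI ballI)
    fix i assume "i < r"
    then have "e i \<in> T" using img assms(2) by auto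
    then show "f i \<in> Eset T" unfolding f_def Eset_def by simp
  next
    fix c i assume h: "(\<Sum>i<r. fps_const (c i) * f i) \<in> Eset T'" and i: "i < r"
    show "c i = 0"
    proof (rule ccontr)
      assume "c i \<noteq> 0"
      then have "e i \<in> T'" using h at[OF i, of c] unfolding Eset_def by auto
      moreover have "e i \<in> B" using img i by auto
      ultimately show False using assms(4) by auto
    qed
  next
    fix g :: "'k fps" assume g: "g \<in> Eset T"
    show "\<exists>c. g - (\<Sum>i<r. fps_const (c i) * f i) \<in> Eset T'"
    proof (intro exI[of _ "\<lambda>i. g $ e i"])
      show "g - (\<Sum>i<r. fps_const (g $ e i) * f i) \<in> Eset T'" unfolding Eset_def
      proof (intro CollectI allI impI)
        fix s assume s: "(g - (\<Sum>i<r. fps_const (g $ e i) * f i)) $ s \<noteq> 0"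
        show "s \<in> T'"
        proof (cases "s \<in> B")
          case True
          then obtain i0 where "i0 < r" "s = e i0" using img by auto
          then show ?thesis using s at[of i0 "\<lambda>i. g $ e i"] by simp
        next
          case False
          then have "g $ s \<noteq> 0" using s off[OF False] by simp
          then have "s \<in> T" using g unfolding Eset_def by auto
          then show ?thesis using False assms(3) by auto
        qed
      qed
    qed
  qed
qed

definition ordi :: "nat \<Rightarrow> nat" where "ordi x = mu_i x + nu_i x + xi_i x"
definition BB :: "nat \<Rightarrow> nat" where "BB x = 3 * mu_i x + 2 * nu_i x + xi_i x"
definition AA :: "nat \<Rightarrow> nat" where "AA x = 4 * mu_i x + 3 * nu_i x + 2 * xi_i x"

lemma comps:
  assumes "r < 6"
  shows "mu_i (6*q+r) = q" "nu_i (6*q+r) = (if r \<ge> 3 then 1 else 0)"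
        "xi_i (6*q+r) = (if r\<ge>3 then r-3 else r)"
proof -
  have "(6*q+r) div 6 = q" "(6*q+r) mod 6 = r" using assms by simp_all
  then show "mu_i (6*q+r) = q" "nu_i (6*q+r) = (if r \<ge> 3 then 1 else 0)"
        "xi_i (6*q+r) = (if r\<ge>3 then r-3 else r)" by (simp_all add: mu_i_def nu_i_def xi_i_def)
qed

lemma qr: obtains q r where "x = 6*q + r" "r < (6::nat)"
  using div_mult_mod_eq[of x 6] by (metis mod_less_divisor zero_less_numeral mult.commute)

lemma six: "(r::nat) < 6 \<Longrightarrow> r = 0 \<or> r = 1 \<or> r = 2 \<or> r = 3 \<or> r = 4 \<or> r = 5" by arith

lemma BBf: "r < 6 \<Longrightarrow> BB (6*q+r) = 3*q + (if r \<ge> 3 then r - 1 else r)"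
  unfolding BB_def by (simp add: comps) arith
lemma AAf: "r < 6 \<Longrightarrow> AA (6*q+r) = 4*q + (if r \<ge> 3 then 2*r - 3 else 2*r)"
  unfolding AA_def by (simp add: comps) arith
lemma ordf: "r < 6 \<Longrightarrow> ordi (6*q+r) = q + (if r \<ge> 3 then r - 2 else r)"
  unfolding ordi_def by (simp add: comps) arith

lemma dec: "x = 6 * mu_i x + 3 * nu_i x + xi_i x"
proof -
  obtain q r where x: "x = 6*q + r" "r < 6" by (rule qr)
  show ?thesis using x by (simp add: comps)
qed

lemma AA_eq: "AA x = ordi x + BB x" unfolding AA_def BB_def ordi_def by simp

lemma B1: "BB (x+1) \<le> BB x + 1"
proof -
  obtain q r where x: "x = 6*q + r" "r < 6" by (rule qr)
  show ?thesis
  proof (cases "r = 5")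
    case True
    then have "x + 1 = 6*(q+1) + 0" using x by simp
    then show ?thesis using x True by (simp only: BBf) simp
  next
    case False
    then have "x + 1 = 6*q + (r+1)" "r+1 < 6" using x by simp_all
    then show ?thesis using x False by (simp only: BBf) (use six[OF x(2)] in auto)
  qed
qed

lemma B3: "BB (x+3) \<le> BB x + 2"
proof -
  obtain q r where x: "x = 6*q + r" "r < 6" by (rule qr)
  show ?thesis
  proof (cases "r \<ge> 3")
    case True
    then have "x + 3 = 6*(q+1) + (r-3)" "r - 3 < 6" using x by simp_all
    then show ?thesis using x True by (simp only: BBf) (use six[OF x(2)] in auto)
  next
    case False
    then have "x + 3 = 6*q + (r+3)" "r+3 < 6" using x by simp_all
    then show ?thesis using x False by (simp only: BBf) (use six[OF x(2)] in auto)
  qed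
qed

lemma B6: "BB (x+6) = BB x + 3"
proof -
  obtain q r where x: "x = 6*q + r" "r < 6" by (rule qr)
  then have "x + 6 = 6*(q+1) + r" by simp
  then show ?thesis using x by (simp only: BBf)
qed

lemma A1: "AA (x+1) \<le> AA x + 2"
proof -
  obtain q r where x: "x = 6*q + r" "r < 6" by (rule qr)
  show ?thesis
  proof (cases "r = 5")
    case True
    then have "x + 1 = 6*(q+1) + 0" using x by simp
    then show ?thesis using x True by (simp only: AAf) simp
  next
    case False
    then have "x + 1 = 6*q + (r+1)" "r+1 < 6" using x by simp_all
    then show ?thesis using x False by (simp only: AAf) (use six[OF x(2)] in auto)
  qed
qed

lemma A3: "AA (x+3) \<le> AA x + 3"
proof -
  obtain q r where x: "x = 6*q + r" "r < 6" by (rule qr)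
  show ?thesis
  proof (cases "r \<ge> 3")
    case True
    then have "x + 3 = 6*(q+1) + (r-3)" "r - 3 < 6" using x by simp_all
    then show ?thesis using x True by (simp only: AAf) (use six[OF x(2)] in auto)
  next
    case False
    then have "x + 3 = 6*q + (r+3)" "r+3 < 6" using x by simp_all
    then show ?thesis using x False by (simp only: AAf) (use six[OF x(2)] in auto)
  qed
qed

lemma A6: "AA (x+6) = AA x + 4"
proof -
  obtain q r where x: "x = 6*q + r" "r < 6" by (rule qr)
  then have "x + 6 = 6*(q+1) + r" by simp
  then show ?thesis using x by (simp only: AAf)
qed

lemma BB0: "BB 0 = 0" unfolding BB_def mu_i_def nu_i_def xi_i_def by simp
lemma AA0: "AA 0 = 0" unfolding AA_def mu_i_def nu_i_def xi_i_def by simp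

lemma L1a: "BB c1 \<le> c1"
proof (induction c1)
  case (Suc n) then show ?case using B1[of n] by simp
qed (simp add: BB0)
lemma L1b: "BB (c1 + 3*c2) \<le> c1 + 2*c2"
proof (induction c2)
  case (Suc n)
  have e: "c1 + 3 * Suc n = (c1 + 3*n) + 3" by simp
  show ?case unfolding e using B3[of "c1 + 3*n"] Suc.IH by simp
qed (simp add: L1a)
lemma L1: "BB (c1 + 3*c2 + 6*c3) \<le> c1 + 2*c2 + 3*c3"
proof (induction c3)
  case (Suc n)
  have e: "c1 + 3 * c2 + 6 * Suc n = (c1 + 3*c2 + 6*n) + 6" by simp
  show ?case unfolding e using B6[of "c1 + 3*c2 + 6*n"] Suc.IH by simp
qed (simp add: L1b)

lemma L2a: "AA c1 \<le> 2*c1"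
proof (induction c1)
  case (Suc n) then show ?case using A1[of n] by simp
qed (simp add: AA0)
lemma L2b: "AA (c1 + 3*c2) \<le> 2*c1 + 3*c2"
proof (induction c2)
  case (Suc n)
  have e: "c1 + 3 * Suc n = (c1 + 3*n) + 3" by simp
  show ?case unfolding e using A3[of "c1 + 3*n"] Suc.IH by simp
qed (simp add: L2a)
lemma L2: "AA (c1 + 3*c2 + 6*c3) \<le> 2*c1 + 3*c2 + 4*c3"
proof (induction c3)
  case (Suc n)
  have e: "c1 + 3 * c2 + 6 * Suc n = (c1 + 3*c2 + 6*n) + 6" by simp
  show ?case unfolding e using A6[of "c1 + 3*c2 + 6*n"] Suc.IH by simp
qed (simp add: L2b)

lemma L3: assumes "x + 3 \<le> y" shows "BB x \<le> BB y"
proof -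
  obtain q r where x: "x = 6*q + r" "r < 6" by (rule qr)
  obtain q' r' where y: "y = 6*q' + r'" "r' < 6" by (rule qr)
  show ?thesis using x y assms six[OF x(2)] six[OF y(2)] by (simp only: BBf) auto
qed

lemma L4: assumes "x + 6 \<le> y" shows "AA x \<le> AA y"
proof -
  obtain q r where x: "x = 6*q + r" "r < 6" by (rule qr)
  obtain q' r' where y: "y = 6*q' + r'" "r' < 6" by (rule qr)
  show ?thesis using x y assms six[OF x(2)] six[OF y(2)] by (simp only: AAf) auto
qed

lemma L5: assumes "i < a" shows "ordi i \<le> a div 6 + 2"
proof -
  obtain q r where x: "i = 6*q + r" "r < 6" by (rule qr)
  obtain q' r' where y: "a = 6*q' + r'" "r' < 6" by (rule qr)
  have "a div 6 = q'" using y by simp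
  then show ?thesis using x y assms six[OF x(2)] six[OF y(2)] by (simp only: ordf) auto
qed

lemma F1:
  assumes "7 \<le> a" "s = c0*a + c1*(2*a+d) + c2*(3*a+3*d) + c3*(4*a+6*d)"
  shows "\<exists>i q. i < a \<and> s = (AA i + q)*a + i*d \<and> c0+c1+c2+c3 \<le> q + ordi i"
proof -
  define j where "j = c1 + 3*c2 + 6*c3"
  define P where "P = c0 + 2*c1 + 3*c2 + 4*c3"
  have s: "s = P*a + j*d" unfolding assms(2) j_def P_def by (simp add: algebra_simps)
  define i where "i = j mod a"
  define m where "m = j div a"
  have ia: "i < a" using assms(1) unfolding i_def by simp
  have jm: "j = i + m*a" unfolding i_def m_def by simp
  have hA: "AA i \<le> P + m*d"
  proof (cases "m = 0")
    case True
    then show ?thesis using jm L2[of c1 c2 c3] unfolding j_def P_def by simp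
  next
    case False
    then have "a \<le> m*a" by simp
    then have "i + 6 \<le> j" using jm assms(1) by linarith
    then have "AA i \<le> AA j" by (rule L4)
    then show ?thesis using L2[of c1 c2 c3] unfolding j_def P_def by simp
  qed
  have hB: "BB i \<le> c1 + 2*c2 + 3*c3 + m*d"
  proof (cases "m = 0")
    case True
    then show ?thesis using jm L1[of c1 c2 c3] unfolding j_def by simp
  next
    case False
    then have "a \<le> m*a" by simp
    then have "i + 3 \<le> j" using jm assms(1) by linarith
    then have "BB i \<le> BB j" by (rule L3)
    then show ?thesis using L1[of c1 c2 c3] unfolding j_def by simp
  qed
  define q where "q = P + m*d - AA i"
  have qA: "q + AA i = P + m*d" unfolding q_def using hA by simp
  have "s = (AA i + q)*a + i*d"
  proof -
    have "s = P*a + (i + m*a)*d" using s jm by simp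
    also have "\<dots> = (P + m*d)*a + i*d" by (simp add: algebra_simps)
    finally show ?thesis using qA by (simp add: add.commute)
  qed
  moreover have "c0+c1+c2+c3 \<le> q + ordi i"
    using qA hB AA_eq[of i] unfolding P_def by linarith
  ultimately show ?thesis using ia by blast
qed

lemma F2: "(AA i + q)*a + i*d = q*a + xi_i i*(2*a+d) + nu_i i*(3*a+3*d) + mu_i i*(4*a+6*d)"
proof -
  have "i*d = (6 * mu_i i + 3 * nu_i i + xi_i i) * d" using dec[of i] by simp
  then show ?thesis unfolding AA_def by (simp add: algebra_simps)
qed

lemma F2c: "q + ordi i = q + xi_i i + nu_i i + mu_i i" unfolding ordi_def by simp

lemma U:
  assumes "i < a" "i' < a" "gcd a d = 1" "x*a + i*d = y*a + i'*(d::nat)"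
  shows "i = i' \<and> x = y"
proof -
  have "int x * int a + int i * int d = int y * int a + int i' * int d"
    using assms(4) by (metis of_nat_add of_nat_mult)
  then have e: "(int i - int i') * int d = (int y - int x) * int a" by (simp add: algebra_simps)
  have cop: "coprime (int a) (int d)" using assms(3) by (simp add: coprime_iff_gcd_eq_1)
  have "int a dvd (int i - int i') * int d" unfolding e by simp
  then have dv: "int a dvd (int i - int i')" using cop by (simp add: coprime_dvd_mult_left_iff)
  have ii: "i = i'"
  proof (rule ccontr)
    assume "i \<noteq> i'"
    then have "int i - int i' \<noteq> 0" by simp
    from dvd_imp_le_int[OF this dv] have "\<bar>int a\<bar> \<le> \<bar>int i - int i'\<bar>" .
    then show False using assms(1,2) by linarith
  qed
  have "x*a = y*a" using assms(4) ii by simp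
  then have "x = y" using assms(1) by simp
  then show ?thesis using ii by simp
qed


lemma sum4: "(\<Sum>j<(4::nat). f j) = f 0 + f 1 + f 2 + (f 3 :: nat)"
  by (simp add: eval_nat_numeral)

lemma Tset4:
  "s \<in> Tset [a, 2*a + d, 3*a + 3*d, 4*a + 6*d] n \<longleftrightarrow>
   (\<exists>c0 c1 c2 c3. s = c0*a + c1*(2*a+d) + c2*(3*a+3*d) + c3*(4*a+6*d) \<and> n \<le> c0+c1+c2+c3)"
  (is "_ \<in> Tset ?gs n \<longleftrightarrow> _")
proof
  assume "s \<in> Tset ?gs n"
  then obtain c where c: "s = (\<Sum>j<length ?gs. c j * ?gs!j)" "n \<le> (\<Sum>j<length ?gs. c j)"
    unfolding Tset_def by blast
  have L: "length ?gs = 4" by simp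
  from c have c: "s = (\<Sum>j<4. c j * ?gs!j)" "n \<le> (\<Sum>j<4. c j)" unfolding L .
  then show "\<exists>c0 c1 c2 c3. s = c0*a + c1*(2*a+d) + c2*(3*a+3*d) + c3*(4*a+6*d) \<and> n \<le> c0+c1+c2+c3"
    unfolding sum4 by (intro exI[of _ "c 0"] exI[of _ "c 1"] exI[of _ "c 2"] exI[of _ "c 3"]) simp
next
  assume "\<exists>c0 c1 c2 c3. s = c0*a + c1*(2*a+d) + c2*(3*a+3*d) + c3*(4*a+6*d) \<and> n \<le> c0+c1+c2+c3"
  then obtain c0 c1 c2 c3 where h: "s = c0*a + c1*(2*a+d) + c2*(3*a+3*d) + c3*(4*a+6*d)" "n \<le> c0+c1+c2+c3"
    by blast
  define c where "c = (\<lambda>j::nat. if j = 0 then c0 else if j = 1 then c1 else if j = 2 then c2 else c3)"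
  have c1: "s = (\<Sum>j<4. c j * ?gs!j)" "n \<le> (\<Sum>j<4. c j)"
    unfolding sum4 c_def using h by simp_all
  have L: "length ?gs = 4" by simp
  show "s \<in> Tset ?gs n" unfolding Tset_def L
    by (intro CollectI exI[of _ c] conjI c1)
qed

lemma inT: "(AA i + q)*a + i*d \<in> Tset [a, 2*a + d, 3*a + 3*d, 4*a + 6*d] (q + ordi i)"
  unfolding Tset4 F2 F2c by blast

lemma Dset:
  assumes a: "7 \<le> a" and g: "gcd a d = 1"
  shows "Tset [a, 2*a + d, 3*a + 3*d, 4*a + 6*d] n - Tset [a, 2*a + d, 3*a + 3*d, 4*a + 6*d] (Suc n)
       = (\<lambda>i. (AA i + (n - ordi i))*a + i*d) ` {i. i<a \<and> ordi i \<le> n}"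
  (is "Tset ?gs n - Tset ?gs (Suc n) = ?f ` ?I")
proof (rule set_eqI, rule iffI)
  fix s assume s: "s \<in> Tset ?gs n - Tset ?gs (Suc n)"
  have sn: "s \<in> Tset ?gs n" using s by blast
  obtain c0 c1 c2 c3 where h: "s = c0*a + c1*(2*a+d) + c2*(3*a+3*d) + c3*(4*a+6*d)" "n \<le> c0+c1+c2+c3"
    using sn[unfolded Tset4] by blast
  obtain i q where iq: "i < a" "s = (AA i + q)*a + i*d" "c0+c1+c2+c3 \<le> q + ordi i"
    using F1[OF a h(1)] by blast
  have sq: "s \<in> Tset ?gs (q + ordi i)" unfolding iq(2) by (rule inT)
  have "q + ordi i \<le> n"
  proof (rule ccontr)
    assume "\<not> q + ordi i \<le> n"
    then have "Suc n \<le> q + ordi i" by simp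
    then have "Tset ?gs (q + ordi i) \<subseteq> Tset ?gs (Suc n)" by (rule T_mono)
    then show False using s sq by blast
  qed
  then have "q = n - ordi i" "ordi i \<le> n" using h(2) iq(3) by linarith+
  then show "s \<in> ?f ` ?I" using iq by auto
next
  fix s assume "s \<in> ?f ` ?I"
  then obtain i where i: "i < a" "ordi i \<le> n" "s = (AA i + (n - ordi i))*a + i*d" by auto
  have "s \<in> Tset ?gs n" using inT[of i "n - ordi i" a d] i by simp
  moreover have "s \<notin> Tset ?gs (Suc n)"
  proof
    assume sn: "s \<in> Tset ?gs (Suc n)"
    obtain c0 c1 c2 c3 where h: "s = c0*a + c1*(2*a+d) + c2*(3*a+3*d) + c3*(4*a+6*d)" "Suc n \<le> c0+c1+c2+c3"
      using sn[unfolded Tset4] by blast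
    obtain i' q where iq: "i' < a" "s = (AA i' + q)*a + i'*d" "c0+c1+c2+c3 \<le> q + ordi i'"
      using F1[OF a h(1)] by blast
    have eq: "(AA i' + q)*a + i'*d = (AA i + (n - ordi i))*a + i*d" using iq(2) i(3) by simp
    have "i' = i \<and> AA i' + q = AA i + (n - ordi i)"
      using U[OF iq(1) i(1) g eq] .
    then have "q = n - ordi i" "i' = i" by auto
    then have "c0+c1+c2+c3 \<le> n - ordi i + ordi i" using iq(3) by simp
    then show False using h(2) i(2) by linarith
  qed
  ultimately show "s \<in> Tset ?gs n - Tset ?gs (Suc n)" by simp
qed

lemma Dinj:
  assumes "gcd a d = 1"
  shows "inj_on (\<lambda>i. (AA i + (n - ordi i))*a + i*d) {i. i<a \<and> ordi i \<le> n}"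
proof (rule inj_onI)
  fix x y assume x: "x \<in> {i. i<a \<and> ordi i \<le> n}" and y: "y \<in> {i. i<a \<and> ordi i \<le> n}"
    and eq: "(AA x + (n - ordi x))*a + x*d = (AA y + (n - ordi y))*a + y*d"
  have "x < a" "y < a" using x y by auto
  from U[OF this assms eq] show "x = y" by simp
qed

lemma cardI:
  assumes "1 \<le> a"
  shows "card {i. i<a \<and> ordi i \<le> n} = (\<Sum>k\<le>n. t_coeff a k)"
proof (induction n)
  case 0
  have "{i. i<a \<and> ordi i \<le> 0} = {i. i \<le> a - 1 \<and> mu_i i + nu_i i + xi_i i = 0}"
    using assms unfolding ordi_def by auto
  then show ?case unfolding t_coeff_def by simp
next
  case (Suc n)
  have e: "{i. i<a \<and> ordi i \<le> Suc n} = {i. i<a \<and> ordi i \<le> n} \<union> {i. i \<le> a - 1 \<and> mu_i i + nu_i i + xi_i i = Suc n}"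
    using assms unfolding ordi_def by auto
  have "card {i. i<a \<and> ordi i \<le> Suc n} = card {i. i<a \<and> ordi i \<le> n} + t_coeff a (Suc n)"
    unfolding e t_coeff_def by (rule card_Un_disjoint) (auto simp: ordi_def)
  then show ?case using Suc.IH by simp
qed

lemma tzero:
  assumes "1 \<le> a" "a div 6 + 2 < k" shows "t_coeff a k = 0"
proof -
  have "{i. i \<le> a - 1 \<and> mu_i i + nu_i i + xi_i i = k} = {}"
  proof -
    { fix i assume "i \<le> a - 1" "mu_i i + nu_i i + xi_i i = k"
      then have "i < a" "ordi i = k" using assms unfolding ordi_def by auto
      then have False using L5[of i a] assms by simp }
    then show ?thesis by blast
  qed
  then show ?thesis unfolding t_coeff_def by simp
qed



theorem corollary6p9:
  fixes a d :: nat
  assumes "infinite (UNIV :: 'k::field set)"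
    and "d > 0" and "a \<ge> 7" and "gcd a d = 1"
  defines "S \<equiv> num_semigroup [a, 2*a + d, 3*a + 3*d, 4*a + 6*d]"
  shows "\<exists>h :: nat \<Rightarrow> nat.
           (\<forall>n. quot_dim (max_ideal_pow S n :: 'k fps set) (max_ideal_pow S (Suc n)) (h n)) \<and>
           Abs_fps (\<lambda>n. real (h n)) =
             (\<Sum>k=0..a div 6 + 2. of_nat (t_coeff a k) * fps_X ^ k) / (1 - fps_X)"
proof -
  define gs where "gs = [a, 2*a+d, 3*a+3*d, 4*a+6*d]"
  have a: "7 \<le> a" and g: "gcd a d = 1" using assms by auto
  have pos: "\<forall>g\<in>set gs. 0 < g" using assms unfolding gs_def by auto
  define h where "h n = card (Tset gs n - Tset gs (Suc n))" for n
  have D: "Tset gs n - Tset gs (Suc n) = (\<lambda>i. (AA i + (n - ordi i))*a + i*d) ` {i. i<a \<and> ordi i \<le> n}" for n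
    using Dset[OF a g] unfolding gs_def .
  have hn: "h n = card {i. i<a \<and> ordi i \<le> n}" for n
    unfolding h_def D by (rule card_image[OF Dinj[OF g]])
  have qdn: "quot_dim (max_ideal_pow S n :: 'k fps set) (max_ideal_pow S (Suc n)) (h n)" for n
  proof -
    have fin: "finite (Tset gs n - Tset gs (Suc n))" unfolding D by simp
    have "quot_dim (Eset (Tset gs n) :: 'k fps set) (Eset (Tset gs (Suc n))) (h n)"
      unfolding h_def by (rule qd[OF fin]) auto
    then show ?thesis unfolding S_def gs_def[symmetric] pow_eq[OF pos] .
  qed
  define t where "t k = t_coeff a k" for k
  define K where "K = a div 6 + 2"
  define P :: "real fps" where "P = (\<Sum>k=0..K. of_nat (t k) * fps_X ^ k)"
  have hsum: "h n = (\<Sum>k\<le>n. t k)" for n unfolding hn t_def using a by (intro cardI) simp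
  have Pn: "P $ n = real (t n)" for n
  proof -
    have "P $ n = (\<Sum>k=0..K. (of_nat (t k) * fps_X ^ k :: real fps) $ n)"
      unfolding P_def by (simp add: fps_sum_nth)
    also have "\<dots> = (\<Sum>k=0..K. if n = k then real (t k) else 0)"
    proof (rule sum.cong)
      fix k
      have "(of_nat (t k) * fps_X ^ k :: real fps) $ n = (fps_const (real (t k)) * fps_X ^ k) $ n"
        by (simp add: fps_of_nat[symmetric])
      also have "\<dots> = (if n = k then real (t k) else 0)" by simp
      finally show "(of_nat (t k) * fps_X ^ k :: real fps) $ n = (if n = k then real (t k) else 0)" .
    qed simp
    also have "\<dots> = (if n \<le> K then real (t n) else 0)" by (simp add: sum.delta)
    also have "\<dots> = real (t n)"
      using tzero[of a n] a unfolding t_def K_def by auto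
    finally show ?thesis .
  qed
  define F :: "real fps" where "F = Abs_fps (\<lambda>n. real (h n))"
  have FP: "F * (1 - fps_X) = P"
  proof (rule fps_ext)
    fix n
    have "(F * (1 - fps_X)) $ n = F $ n - (fps_X * F) $ n" by (simp add: algebra_simps)
    also have "\<dots> = real (t n)"
    proof (cases n)
      case 0
      then show ?thesis unfolding F_def using hsum[of 0] by simp
    next
      case (Suc m)
      then show ?thesis unfolding F_def using hsum[of m] hsum[of "Suc m"] by simp
    qed
    finally show "(F * (1 - fps_X)) $ n = P $ n" using Pn by simp
  qed
  have nz: "(1 - fps_X :: real fps) \<noteq> 0"
  proof
    assume "(1 - fps_X :: real fps) = 0"
    then have "(1 - fps_X :: real fps) $ 0 = 0" by simp
    then show False by simp
  qed
  have "P / (1 - fps_X) = F" unfolding FP[symmetric] using nz by simp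
  then show ?thesis using qdn unfolding F_def P_def K_def t_def by auto
qed
end
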